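(* Let $t$ be an integer with $m=2t+1\geq 11$ and $n=2^m+1$. Put $\delta_1=\frac{n}{3}$, $\delta_2=\frac{n-3}{6}$, $\delta_3=\delta_2-2$, $\delta_4=\delta_2-8$, $\delta_5=\delta_2-10$. Then $\delta_1>\delta_2>\delta_3>\delta_4>\delta_5$ are respectively the first, second, third, fourth and fifth largest coset leaders modulo $n$ (i.e. they are coset leaders, and every integer $x$ with $\delta_5<x\leq n-1$ that is a coset leader belongs to $\{\delta_1,\delta_2,\delta_3,\delta_4\}$).
   Context: For $n=2^m+1$ and an integer $x$, the 2-cyclotomic coset of $x$ modulo $n$ is $C_x=\{x\cdot 2^{j} \bmod n : j\geq 0\}\subseteq\{0,1,\dots,n-1\}$. For $0\leq x\leq n-1$, "$x$ is a coset leader" means that $x$ is the smallest element of $C_x$. *)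

theory Defs
  imports Main
begin

definition cyc_coset :: "nat \<Rightarrow> nat \<Rightarrow> nat set" where
  "cyc_coset n x = {(x * 2 ^ j) mod n | j. True}"

definition coset_leader :: "nat \<Rightarrow> nat \<Rightarrow> bool" where
  "coset_leader n x \<longleftrightarrow> x < n \<and> (\<forall>y \<in> cyc_coset n x. x \<le> y)"

end

theory Submission imports Defs begin

lemma modI: "r < n \<Longrightarrow> a = q*n + r \<Longrightarrow> a mod (n::nat) = r" by simp

lemma coset_step: "(x * 2 ^ Suc j) mod n = (2 * (x * 2 ^ j mod n)) mod (n::nat)"
  by (metis mod_mult_right_eq mult.assoc mult.commute power_Suc)

lemma neg_mod:
  fixes a n :: nat
  assumes "a mod n \<noteq> 0" "n > 0"
  shows "(a * (n - 1)) mod n = n - a mod n"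
proof -
  define q where "q = a div n"
  define r where "r = a mod n"
  have a: "a = q*n + r" unfolding q_def r_def by simp
  have n: "n > 0" using assms by auto
  have r0: "0 < r" "r < n" using assms n unfolding r_def by auto
  obtain n' where n': "n = Suc n'" using n by (cases n) auto
  obtain r' where r': "r = Suc r'" using r0 by (cases r) auto
  have "a*(n-1) = (q*n' + r')*n + (n - r)"
    using a r0 unfolding n' r' by (simp add: algebra_simps)
  then show ?thesis using r0 r_def by (simp add: modI)
qed

lemma coset_neg:
  fixes n x j m :: nat
  assumes "2^m + 1 = n" "x*2^j mod n \<noteq> 0"
  shows "x*2^(j+m) mod n = n - x*2^j mod n"
proof -
  have "2^m = n - 1" using assms(1) by simp
  then have "x*2^(j+m) = (x*2^j)*(n-1)" by (simp add: power_add)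
  moreover have "n > 0" using assms(1) by simp
  ultimately show ?thesis using neg_mod[OF assms(2)] by metis
qed

lemma in_coset: "x*2^j mod n \<in> cyc_coset n x"
  by (auto simp: cyc_coset_def)

lemma not_leader: "z \<in> cyc_coset n x \<Longrightarrow> z < x \<Longrightarrow> \<not> coset_leader n x"
  unfolding coset_leader_def by (meson not_le)

lemma leader_by_invariant:
  fixes n x :: nat and P :: "nat set"
  assumes "x < n" "odd n" "x \<in> P"
    and bnd: "\<And>y. y \<in> P \<Longrightarrow> 0 < y \<and> y < n \<and> x \<le> y \<and> y \<le> n - x"
    and stp: "\<And>y. y \<in> P \<Longrightarrow> (2*y) mod n \<in> P \<or> (2*y) mod n = n - x"
  shows "coset_leader n x"
proof -
  let ?S = "P \<union> (\<lambda>y. n - y) ` P"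
  have S: "x*2^j mod n \<in> ?S" for j
  proof (induction j)
    case 0
    then show ?case using assms by simp
  next
    case (Suc j)
    let ?z = "x*2^j mod n"
    have e: "x * 2 ^ Suc j mod n = 2 * ?z mod n" by (rule coset_step)
    show ?case
    proof (cases "?z \<in> P")
      case True
      then show ?thesis using stp[OF True] e assms(3) by auto
    next
      case False
      then obtain y where y: "y \<in> P" "?z = n - y" using Suc by auto
      have yb: "0 < y" "y < n" using bnd[OF y(1)] by auto
      have "2*(n-y) mod n = n - 2*y mod n"
      proof (cases "2*y < n")
        case True
        then have "2*(n-y) = 1*n + (n - 2*y)" using yb by simp
        then have "2*(n-y) mod n = n - 2*y" using True yb by (intro modI[where q=1]) auto
        then show ?thesis using True by simp
      next
        case False
        then have "2*y \<noteq> n" using \<open>odd n\<close> by auto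
        have h1: "2*y mod n = (2*y - n) mod n" using False by (intro le_mod_geq) simp
        have h: "2*y mod n = 2*y - n" unfolding h1 using yb by (intro mod_less) linarith
        have "2*(n-y) < n" using False \<open>2*y \<noteq> n\<close> yb by linarith
        then show ?thesis using h False by simp
      qed
      then show ?thesis using y e stp[OF y(1)] assms(3) assms(1) by auto
    qed
  qed
  show ?thesis unfolding coset_leader_def cyc_coset_def
    using S bnd assms(1) by fastforce
qed

lemma gen_leader:
  fixes n N x s K :: nat and Tl :: "nat set"
  assumes n: "n = 3*N" "odd N" and xs: "2*x + s = N" and s1: "1 \<le> s" and sN: "s < N"
    and bK: "2*s*4^K \<le> N + s"
    and tl0: "(2*(2*N - 2*s*4^K)) mod n \<in> Tl \<union> {n - x}"
    and tlb: "\<And>y. y \<in> Tl \<Longrightarrow> 0 < y \<and> y < n \<and> x \<le> y \<and> y \<le> n - x"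
    and tls: "\<And>y. y \<in> Tl \<Longrightarrow> (2*y) mod n \<in> Tl \<union> {n-x}"
  shows "coset_leader n x"
proof -
  define P where "P = {x} \<union> {N - s*4^k |k. k \<le> K} \<union> {2*N - 2*s*4^k |k. k \<le> K} \<union> Tl"
  have pk: "s \<le> s*4^k \<and> 2*(s*4^k) \<le> N + s" if "k \<le> K" for k
  proof -
    have "(4::nat)^k \<le> 4^K" using that by (simp add: power_increasing)
    then have "s*4^k \<le> s*4^K" by simp
    moreover have "(1::nat) \<le> 4^k" by simp
    then have "s \<le> s*4^k" by simp
    ultimately show ?thesis using bK by linarith
  qed
  show ?thesis
  proof (rule leader_by_invariant[where P=P])
    show "x < n" using xs n sN by linarith
    show "odd n" using n by simp
    show "x \<in> P" unfolding P_def by simp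
  next
    fix y assume "y \<in> P"
    then consider "y = x" | k where "k \<le> K" "y = N - s*4^k" | k where "k \<le> K" "y = 2*N - 2*s*4^k" | "y \<in> Tl"
      unfolding P_def by blast
    then show "0 < y \<and> y < n \<and> x \<le> y \<and> y \<le> n - x"
    proof cases
      case 1 then show ?thesis using xs n sN by linarith
    next
      case (2 k) then show ?thesis using pk[OF 2(1)] xs n sN by linarith
    next
      case (3 k)
      have a: "2*s*4^k = 2*(s*4^k)" by simp
      show ?thesis using 3 pk[OF 3(1)] xs n sN a by linarith
    next
      case 4 then show ?thesis using tlb by blast
    qed
  next
    fix y assume "y \<in> P"
    then consider "y = x" | k where "k \<le> K" "y = N - s*4^k" | k where "k \<le> K" "y = 2*N - 2*s*4^k" | "y \<in> Tl"
      unfolding P_def by blast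
    then show "(2*y) mod n \<in> P \<or> (2*y) mod n = n - x"
    proof cases
      case 1
      have "2*y = N - s*4^0" using 1 xs by simp
      moreover have "2*y < n" using 1 xs n sN by linarith
      ultimately have "2*y mod n = N - s*4^0" by simp
      then show ?thesis unfolding P_def by blast
    next
      case (2 k)
      have a: "2*s*4^k = 2*(s*4^k)" by simp
      have "2*y = 2*N - 2*s*4^k" using 2 pk[OF 2(1)] a by simp
      moreover have "2*y < n" using 2 pk[OF 2(1)] a xs n sN by linarith
      ultimately have "2*y mod n = 2*N - 2*s*4^k" by simp
      then show ?thesis unfolding P_def using 2 by blast
    next
      case (3 k)
      show ?thesis
      proof (cases "k < K")
        case True
        have "Suc k \<le> K" using True by simp
        note pk2 = pk[OF this]
        have e: "s*4^Suc k = 4*(s*4^k)" by simp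
        have a: "2*s*4^k = 2*(s*4^k)" by simp
        have "2*y mod n = N - s*4^Suc k" using 3 pk2 pk[OF 3(1)] xs n sN e a
          by (intro modI[where q=1]) linarith+
        then show ?thesis unfolding P_def using \<open>Suc k \<le> K\<close> by blast
      next
        case False
        then have "k = K" using 3 by simp
        then show ?thesis using tl0 3 unfolding P_def by auto
      qed
    next
      case 4 then show ?thesis using tls unfolding P_def by blast
    qed
  qed
qed

lemma mod1: "n \<le> a \<Longrightarrow> a < 2*n \<Longrightarrow> a mod n = a - (n::nat)"
  by (simp add: le_mod_geq)

lemma mid_not_leader:
  fixes n N x m :: nat
  assumes n: "n = 3*N" "odd N" and m: "2^m + 1 = n" "odd m" and x: "N < 2*x" "x < N"
  shows "\<not> coset_leader n x"
proof
  assume L: "coset_leader n x"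
  define y where "y j = x*2^j mod n" for j
  have ge: "x \<le> y j" for j
    using L in_coset[of x j n] unfolding coset_leader_def y_def by blast
  have yn: "y j < n" for j unfolding y_def using n x by simp
  have le: "y j \<le> n - x" for j
  proof -
    have "y j \<noteq> 0" using ge[of j] x by linarith
    then have "y (j+m) = n - y j" unfolding y_def using coset_neg[OF m(1)] by blast
    then show ?thesis using ge[of "j+m"] yn[of j] by linarith
  qed
  have st: "y (Suc j) = 2 * y j mod n" for j unfolding y_def by (rule coset_step)
  have cls: "(even j \<longrightarrow> (N < 2*y j \<and> y j < N) \<or> (2*N < y j \<and> 2*y j < 5*N)) \<and> (odd j \<longrightarrow> N < y j \<and> y j < 2*N)" for j
  proof (induction j)
    case 0
    have "y 0 = x" unfolding y_def using n x by simp
    then show ?case using x by simp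
  next
    case (Suc j)
    have g: "x \<le> y (Suc j)" "y (Suc j) \<le> n - x" using ge le by blast+
    show ?case
    proof (cases "even j")
      case True
      then have "(N < 2*y j \<and> y j < N) \<or> (2*N < y j \<and> 2*y j < 5*N)" using Suc by blast
      then have "N < y (Suc j) \<and> y (Suc j) < 2*N"
      proof
        assume a: "N < 2*y j \<and> y j < N"
        then have "y (Suc j) = 2*y j" unfolding st using n by (intro mod_less) linarith
        then show ?thesis using a by linarith
      next
        assume a: "2*N < y j \<and> 2*y j < 5*N"
        then have "y (Suc j) = 2*y j - n" unfolding st using n by (intro mod1) linarith+
        then show ?thesis using a n by linarith
      qed
      then show ?thesis using True by simp
    next
      case False
      then have a: "N < y j \<and> y j < 2*N" using Suc by blast
      have "(N < 2*y (Suc j) \<and> y (Suc j) < N) \<or> (2*N < y (Suc j) \<and> 2*y (Suc j) < 5*N)"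
      proof (cases "2 * y j < n")
        case True
        then have "y (Suc j) = 2*y j" unfolding st by simp
        then show ?thesis using a g n x by linarith
      next
        case False
        have "odd n" using n by simp
        then have "2 * y j \<noteq> n" by (metis dvd_triv_left)
        then have "y (Suc j) = 2*y j - n" unfolding st using n a False by (intro mod1) linarith+
        then show ?thesis using a g n x False by linarith
      qed
      then show ?thesis using False by simp
    qed
  qed
  have "y m = n - x"
  proof -
    have "x mod n \<noteq> 0" using n x by simp
    then have "x*2^(0+m) mod n = n - x*2^0 mod n" using coset_neg[OF m(1), of x 0] by simp
    then show ?thesis unfolding y_def using n x by simp
  qed
  moreover have "N < y m \<and> y m < 2*N" using cls[of m] m(2) by simp
  ultimately show False using n x by linarith
qed

lemma upper_not_leader:
  fixes n N x m :: nat
  assumes n: "n = 3*N" "odd N" and m: "2^m + 1 = n" and x: "N < x" "x < n"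
  shows "\<not> coset_leader n x"
proof (cases "n < 2*x")
  case True
  have "x*2^(0+m) mod n = n - x*2^0 mod n" using coset_neg[OF m, of x 0] x by simp
  then have "n - x \<in> cyc_coset n x" using in_coset[of x m n] x by simp
  then show ?thesis using True by (intro not_leader[of "n-x"]) linarith+
next
  case False
  have "odd n" using n by simp
  then have "2*x \<noteq> n" by (metis dvd_triv_left)
  then have l: "2*x < n" using False by linarith
  have "x*2^(1+m) mod n = n - x*2^1 mod n" using coset_neg[OF m, of x 1] l x by simp
  then have "n - 2*x \<in> cyc_coset n x" using in_coset[of x "1+m" n] l by (simp add: mult.commute)
  then show ?thesis using l x n by (intro not_leader[of "n-2*x"]) linarith+
qed

lemma third_leader:
  fixes n N :: nat
  assumes n: "n = 3*N" "odd N"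
  shows "coset_leader n N"
proof -
  have "N*2^j mod n \<in> {N, 2*N}" for j
  proof (induction j)
    case 0 then show ?case using n by simp
  next
    case (Suc j)
    have e: "N*2^Suc j mod n = 2*(N*2^j mod n) mod n" by (rule coset_step)
    from Suc show ?case
    proof
      assume h: "N * 2 ^ j mod n = N"
      have "2 * (N * 2 ^ j mod n) mod n = (2*N) mod n" by (simp only: h)
      moreover have "(2*N) mod n = 2*N" using n by simp
      ultimately show ?thesis using e by simp
    next
      assume "N * 2 ^ j mod n \<in> {2*N}"
      then have "2 * (N * 2 ^ j mod n) = 4*N" by simp
      moreover have "(4*N) mod n = N" using n by (intro modI[where q=1]) (auto intro: odd_pos)
      ultimately show ?thesis using e by simp
    qed
  qed
  then have A: "N \<le> N*2^j mod n" for j by (metis insert_iff mult_le_mono1 one_le_numeral mult_1 singletonD order_refl)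
  have "0 < N" using n by (auto intro: odd_pos)
  then show ?thesis unfolding coset_leader_def cyc_coset_def using n A by auto
qed

lemma wit_pos: "x*2^j mod n = y \<Longrightarrow> y < x \<Longrightarrow> \<not> coset_leader n x"
  using in_coset[of x j n] not_leader by metis

lemma wit_neg:
  fixes n x j m w :: nat
  assumes "2^m+1 = n" "x*2^j mod n = w" "w \<noteq> 0" "n - w < x"
  shows "\<not> coset_leader n x"
proof -
  have "x*2^(j+m) mod n = n - w" using coset_neg[OF assms(1), of x j] assms(2,3) by simp
  then show ?thesis using wit_pos assms(4) by metis
qed

lemma pow4_mod3: "(4::nat)^k mod 3 = 1"
proof (induction k)
  case 0 then show ?case by simp
next
  case (Suc k)
  have "(4::nat)^Suc k = 4 * 4^k" by simp
  then show ?case using Suc by (simp add: mod_mult_right_eq[of 4 "4^k" 3, symmetric])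
qed

theorem theorem3p5:
  fixes t m n :: nat
  assumes "m = 2 * t + 1" and "m \<ge> 11" and "n = 2 ^ m + 1"
  defines "\<delta>1 \<equiv> n div 3"
      and "\<delta>2 \<equiv> (n - 3) div 6"
  shows "3 dvd n \<and> 6 dvd (n - 3)
    \<and> \<delta>1 > \<delta>2 \<and> \<delta>2 > \<delta>2 - 2 \<and> \<delta>2 - 2 > \<delta>2 - 8 \<and> \<delta>2 - 8 > \<delta>2 - 10
    \<and> coset_leader n \<delta>1 \<and> coset_leader n \<delta>2 \<and> coset_leader n (\<delta>2 - 2)
    \<and> coset_leader n (\<delta>2 - 8) \<and> coset_leader n (\<delta>2 - 10)
    \<and> (\<forall>x. \<delta>2 - 10 < x \<and> x \<le> n - 1 \<and> coset_leader n x
          \<longrightarrow> x \<in> {\<delta>1, \<delta>2, \<delta>2 - 2, \<delta>2 - 8})"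
proof -
  have t5: "t \<ge> 5" using assms(1,2) by linarith
  define T where "T = (4::nat)^(t-3)"
  define R where "R = T div 3"
  have TR: "T = 3*R+1" unfolding R_def T_def using pow4_mod3[of "t-3"] div_mult_mod_eq[of "(4::nat)^(t-3)" 3] by linarith
  have p4: "(2::nat)^(2*(t-3)) = T" unfolding T_def by (simp add: power_mult)
  have "(16::nat) \<le> T" unfolding T_def using power_increasing[of 2 "t-3" "4::nat"] t5 by simp
  then have R5: "R \<ge> 5" using TR by linarith
  have mm: "m = 7 + 2*(t-3)" using assms(1) t5 by simp
  have pm: "(2::nat)^m = 128*(3*R+1)" unfolding mm power_add p4 TR by simp
  have pm2: "(2::nat)^(5 + 2*(t-3)) = 32*(3*R+1)" unfolding power_add p4 TR by simp
  have pm4: "(2::nat)^(3 + 2*(t-3)) = 8*(3*R+1)" unfolding power_add p4 TR by simp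
  have mp: "2^m + 1 = n" using assms(3) by simp
  have nR: "n = 384*R+129" using assms(3) pm by simp
  define N where "N = 128*R+43"
  have nN: "n = 3*N" unfolding N_def nR by simp
  have oN: "odd N" unfolding N_def by simp
  have d1: "\<delta>1 = N" unfolding \<delta>1_def nN by simp
  have d2: "\<delta>2 = 64*R+21" unfolding \<delta>2_def nR by simp
  have K1: "(4::nat)^(t-1) = 16*(3*R+1)"
  proof -
    have "t - 1 = 2 + (t-3)" using t5 by simp
    then show ?thesis unfolding TR[symmetric] T_def by (simp add: power_add)
  qed
  have K2: "(4::nat)^(t-2) = 4*(3*R+1)"
  proof -
    have "t - 2 = 1 + (t-3)" using t5 by simp
    then show ?thesis unfolding TR[symmetric] T_def by (simp add: power_add)
  qed
  have K3: "(4::nat)^(t-3) = 3*R+1" using TR T_def by simp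
  have L1: "coset_leader n (64*R+21)"
  proof (rule gen_leader[where N=N and s=1 and K="t-1" and Tl="{}"])
    show "(2*(2*N - 2*1*4^(t-1))) mod n \<in> {} \<union> {n - (64*R+21)}"
      unfolding K1 N_def nR by simp
  qed (use K1 in \<open>auto simp: nN oN N_def\<close>)
  have L5: "coset_leader n (64*R+19)"
  proof (rule gen_leader[where N=N and s=5 and K="t-2" and Tl="{272*R+92, 160*R+55}"])
    show "(2*(2*N - 2*5*4^(t-2))) mod n \<in> {272*R+92, 160*R+55} \<union> {n - (64*R+19)}"
      unfolding K2 N_def nR by simp
    have "(2*(272*R+92)) mod n = 160*R+55" unfolding nR by (rule modI[where q=1]) auto
    moreover have "(2*(160*R+55)) mod n = n - (64*R+19)" unfolding nR by (rule modI[where q=0]) auto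
    ultimately show "\<And>y. y \<in> {272*R+92, 160*R+55} \<Longrightarrow> (2*y) mod n \<in> {272*R+92, 160*R+55} \<union> {n - (64*R+19)}"
      by auto
  qed (auto simp: nN oN N_def K2 nR)
  have L17: "coset_leader n (64*R+13)"
  proof (rule gen_leader[where N=N and s=17 and K="t-3" and Tl="{308*R+104, 232*R+79, 80*R+29, 160*R+58}"])
    show "(2*(2*N - 2*17*4^(t-3))) mod n \<in> {308*R+104, 232*R+79, 80*R+29, 160*R+58} \<union> {n - (64*R+13)}"
      unfolding K3 N_def nR by simp
    have "(2*(308*R+104)) mod n = 232*R+79" unfolding nR by (rule modI[where q=1]) auto
    moreover have "(2*(232*R+79)) mod n = 80*R+29" unfolding nR by (rule modI[where q=1]) auto
    moreover have "(2*(80*R+29)) mod n = 160*R+58" unfolding nR by (rule modI[where q=0]) auto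
    moreover have "(2*(160*R+58)) mod n = n - (64*R+13)" unfolding nR by (rule modI[where q=0]) auto
    ultimately show "\<And>y. y \<in> {308*R+104, 232*R+79, 80*R+29, 160*R+58} \<Longrightarrow> (2*y) mod n \<in> {308*R+104, 232*R+79, 80*R+29, 160*R+58} \<union> {n - (64*R+13)}"
      by auto
  qed (auto simp: nN oN N_def K3 nR)
  have L21: "coset_leader n (64*R+11)"
  proof (rule gen_leader[where N=N and s=21 and K="t-3" and Tl="{260*R+88, 136*R+47, 272*R+94, 160*R+59}"])
    show "(2*(2*N - 2*21*4^(t-3))) mod n \<in> {260*R+88, 136*R+47, 272*R+94, 160*R+59} \<union> {n - (64*R+11)}"
      unfolding K3 N_def nR by simp
    have "(2*(260*R+88)) mod n = 136*R+47" unfolding nR by (rule modI[where q=1]) auto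
    moreover have "(2*(136*R+47)) mod n = 272*R+94" unfolding nR by (rule modI[where q=0]) auto
    moreover have "(2*(272*R+94)) mod n = 160*R+59" unfolding nR by (rule modI[where q=1]) auto
    moreover have "(2*(160*R+59)) mod n = n - (64*R+11)" unfolding nR by (rule modI[where q=0]) auto
    ultimately show "\<And>y. y \<in> {260*R+88, 136*R+47, 272*R+94, 160*R+59} \<Longrightarrow> (2*y) mod n \<in> {260*R+88, 136*R+47, 272*R+94, 160*R+59} \<union> {n - (64*R+11)}"
      by auto
  qed (auto simp: nN oN N_def K3 nR)
  have LN: "coset_leader n N" by (rule third_leader[OF nN oN])
  have N3: "\<not> coset_leader n (64*R+20)"
  proof (rule wit_neg[OF mp, where j="5 + 2*(t-3)" and w="368*R+124"])
    show "(64*R+20)*2^(5 + 2*(t-3)) mod n = 368*R+124" unfolding pm2 nR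
      by (rule modI[where q="16*R+4"]) (auto simp: algebra_simps)
  qed (auto simp: nR)
  have N19: "\<not> coset_leader n (64*R+12)"
  proof (rule wit_neg[OF mp, where j="5 + 2*(t-3)" and w="368*R+126"])
    show "(64*R+12)*2^(5 + 2*(t-3)) mod n = 368*R+126" unfolding pm2 nR
      by (rule modI[where q="16*R+2"]) (auto simp: algebra_simps)
  qed (auto simp: nR)
  have N11: "\<not> coset_leader n (64*R+16)"
  proof (rule wit_neg[OF mp, where j="3 + 2*(t-3)" and w="380*R+128"])
    show "(64*R+16)*2^(3 + 2*(t-3)) mod n = 380*R+128" unfolding pm4 nR
      by (rule modI[where q="4*R"]) (auto simp: algebra_simps)
  qed (auto simp: nR)
  have N13: "\<not> coset_leader n (64*R+15)"
  proof (rule wit_neg[OF mp, where j="3 + 2*(t-3)" and w="356*R+120"])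
    show "(64*R+15)*2^(3 + 2*(t-3)) mod n = 356*R+120" unfolding pm4 nR
      by (rule modI[where q="4*R"]) (auto simp: algebra_simps)
  qed (auto simp: nR)
  have N15: "\<not> coset_leader n (64*R+14)"
  proof (rule wit_neg[OF mp, where j="3 + 2*(t-3)" and w="332*R+112"])
    show "(64*R+14)*2^(3 + 2*(t-3)) mod n = 332*R+112" unfolding pm4 nR
      by (rule modI[where q="4*R"]) (auto simp: algebra_simps)
  qed (use R5 in \<open>auto simp: nR\<close>)
  have N7: "\<not> coset_leader n (64*R+18)"
  proof (rule wit_pos[where j="3 + 2*(t-3)" and y="44*R+15"])
    show "(64*R+18)*2^(3 + 2*(t-3)) mod n = 44*R+15" unfolding pm4 nR
      by (rule modI[where q="4*R+1"]) (auto simp: algebra_simps)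
  qed auto
  have N9: "\<not> coset_leader n (64*R+17)"
  proof (rule wit_pos[where j="3 + 2*(t-3)" and y="20*R+7"])
    show "(64*R+17)*2^(3 + 2*(t-3)) mod n = 20*R+7" unfolding pm4 nR
      by (rule modI[where q="4*R+1"]) (auto simp: algebra_simps)
  qed auto
  have main: "x \<in> {N, 64*R+21, 64*R+19, 64*R+13}"
    if x: "64*R+11 < x" "x \<le> n - 1" "coset_leader n x" for x
  proof -
    have "x < n" using x nR by linarith
    have "\<not> N < x" using upper_not_leader[OF nN oN mp _ \<open>x < n\<close>] x(3) by blast
    moreover have "\<not> (N < 2*x \<and> x < N)" using mid_not_leader[OF nN oN mp] assms(1) x(3) by auto
    ultimately have "x = N \<or> x \<le> 64*R+21" unfolding N_def by linarith
    moreover {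
      assume "x \<le> 64*R+21"
      then have "x = 64*R+21 \<or> x = 64*R+20 \<or> x = 64*R+19 \<or> x = 64*R+18 \<or> x = 64*R+17 \<or>
                 x = 64*R+16 \<or> x = 64*R+15 \<or> x = 64*R+14 \<or> x = 64*R+13 \<or> x = 64*R+12"
        using x(1) by presburger
      then have ?thesis using x(3) N3 N19 N11 N13 N15 N7 N9 by auto
    }
    ultimately show ?thesis by auto
  qed
  have dv: "3 dvd n" "6 dvd (n-3)" unfolding nR by presburger+
  have e: "(64*R+21::nat) - 2 = 64*R+19" "(64*R+21::nat) - 8 = 64*R+13" "(64*R+21::nat) - 10 = 64*R+11"
    by simp_all
  have main': "\<forall>x. 64*R+11 < x \<and> x \<le> n-1 \<and> coset_leader n x \<longrightarrow> x \<in> {N, 64*R+21, 64*R+19, 64*R+13}"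
    using main by blast
  have ineq: "N > 64*R+21" unfolding N_def by simp
  show ?thesis
    unfolding d1 d2 e
    using dv LN L1 L5 L17 L21 main' ineq
    by (intro conjI) (assumption | linarith)+
qed

end
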